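(* Let $R$ be a commutative local ring, $s\in R$, and $A\in M_2(R;s)$. Then ($\det_s(A)\in J(R)$, $tr(A)\in J(R)$ and $A$ is strongly $J$-clean in $M_2(R;s)$) if and only if $A\in J\big(M_2(R;s)\big)$.
   Context: A commutative ring $R$ is local if it has a unique maximal ideal $J(R)$ (its Jacobson radical); $J(T)$ denotes the Jacobson radical of a ring $T$. For a commutative ring $R$ and $s\in R$, $M_2(R;s)$ denotes the ring whose elements are the $2\times 2$ arrays $\left[\begin{smallmatrix} a&b\\ c&d\end{smallmatrix}\right]$ with $a,b,c,d\in R$, with componentwise addition and multiplication $\left[\begin{smallmatrix} a&b\\ c&d\end{smallmatrix}\right]\left[\begin{smallmatrix} a'&b'\\ c'&d'\end{smallmatrix}\right]=\left[\begin{smallmatrix} aa'+s^2bc'&ab'+bd'\\ ca'+dc'&s^2cb'+dd'\end{smallmatrix}\right]$. For $A=\left[\begin{smallmatrix} a&b\\ c&d\end{smallmatrix}\right]$, $\det_s(A)=ad-s^2bc$ and $tr(A)=a+d$. An element $a$ of a ring $T$ is strongly $J$-clean if there is an idempotent $e\in T$ with $ae=ea$ and $a-e\in J(T)$. *)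

theory Defs
  imports "HOL-Algebra.Algebra"
begin

definition left_ideal :: "'a set \<Rightarrow> ('a, 'b) ring_scheme \<Rightarrow> bool" where
  "left_ideal I T \<longleftrightarrow> additive_subgroup I T \<and>
     (\<forall>a\<in>I. \<forall>x\<in>carrier T. x \<otimes>\<^bsub>T\<^esub> a \<in> I)"

definition maximal_left_ideal :: "'a set \<Rightarrow> ('a, 'b) ring_scheme \<Rightarrow> bool" where
  "maximal_left_ideal I T \<longleftrightarrow> left_ideal I T \<and> I \<noteq> carrier T \<and>
     (\<forall>K. left_ideal K T \<and> I \<subseteq> K \<longrightarrow> K = I \<or> K = carrier T)"

definition jacobson :: "('a, 'b) ring_scheme \<Rightarrow> 'a set" where
  "jacobson T = carrier T \<inter> \<Inter> {I. maximal_left_ideal I T}"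

definition local_cring :: "('a, 'b) ring_scheme \<Rightarrow> bool" where
  "local_cring R \<longleftrightarrow> cring R \<and> (\<exists>!M. maximalideal M R)"

definition strongly_J_clean :: "('a, 'b) ring_scheme \<Rightarrow> 'a \<Rightarrow> bool" where
  "strongly_J_clean T a \<longleftrightarrow>
     (\<exists>e\<in>carrier T. e \<otimes>\<^bsub>T\<^esub> e = e \<and> a \<otimes>\<^bsub>T\<^esub> e = e \<otimes>\<^bsub>T\<^esub> a
        \<and> a \<ominus>\<^bsub>T\<^esub> e \<in> jacobson T)"

text \<open>The generalized matrix ring M_2(R;s); the array [[a,b],[c,d]] is the tuple (a,b,c,d).\<close>

definition m2_mult :: "('a, 'b) ring_scheme \<Rightarrow> 'a \<Rightarrow> 'a \<times> 'a \<times> 'a \<times> 'a \<Rightarrow> 'a \<times> 'a \<times> 'a \<times> 'a \<Rightarrow> 'a \<times> 'a \<times> 'a \<times> 'a" where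
  "m2_mult R s P Q = (case P of (a,b,c,d) \<Rightarrow> case Q of (a',b',c',d') \<Rightarrow>
        (a \<otimes>\<^bsub>R\<^esub> a' \<oplus>\<^bsub>R\<^esub> (s \<otimes>\<^bsub>R\<^esub> s) \<otimes>\<^bsub>R\<^esub> b \<otimes>\<^bsub>R\<^esub> c',
         a \<otimes>\<^bsub>R\<^esub> b' \<oplus>\<^bsub>R\<^esub> b \<otimes>\<^bsub>R\<^esub> d',
         c \<otimes>\<^bsub>R\<^esub> a' \<oplus>\<^bsub>R\<^esub> d \<otimes>\<^bsub>R\<^esub> c',
         (s \<otimes>\<^bsub>R\<^esub> s) \<otimes>\<^bsub>R\<^esub> c \<otimes>\<^bsub>R\<^esub> b' \<oplus>\<^bsub>R\<^esub> d \<otimes>\<^bsub>R\<^esub> d'))"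

definition m2_add :: "('a, 'b) ring_scheme \<Rightarrow> 'a \<times> 'a \<times> 'a \<times> 'a \<Rightarrow> 'a \<times> 'a \<times> 'a \<times> 'a \<Rightarrow> 'a \<times> 'a \<times> 'a \<times> 'a" where
  "m2_add R P Q = (case P of (a,b,c,d) \<Rightarrow> case Q of (a',b',c',d') \<Rightarrow>
        (a \<oplus>\<^bsub>R\<^esub> a', b \<oplus>\<^bsub>R\<^esub> b', c \<oplus>\<^bsub>R\<^esub> c', d \<oplus>\<^bsub>R\<^esub> d'))"

definition M2s :: "('a, 'b) ring_scheme \<Rightarrow> 'a \<Rightarrow> ('a \<times> 'a \<times> 'a \<times> 'a) ring" where
  "M2s R s = \<lparr> carrier = {(a,b,c,d). a \<in> carrier R \<and> b \<in> carrier R \<and> c \<in> carrier R \<and> d \<in> carrier R},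
     monoid.mult = m2_mult R s,
     one = (\<one>\<^bsub>R\<^esub>, \<zero>\<^bsub>R\<^esub>, \<zero>\<^bsub>R\<^esub>, \<one>\<^bsub>R\<^esub>),
     ring.zero = (\<zero>\<^bsub>R\<^esub>, \<zero>\<^bsub>R\<^esub>, \<zero>\<^bsub>R\<^esub>, \<zero>\<^bsub>R\<^esub>),
     ring.add = m2_add R \<rparr>"

definition det_s :: "('a, 'b) ring_scheme \<Rightarrow> 'a \<Rightarrow> 'a \<times> 'a \<times> 'a \<times> 'a \<Rightarrow> 'a" where
  "det_s R s A = (case A of (a,b,c,d) \<Rightarrow> a \<otimes>\<^bsub>R\<^esub> d \<ominus>\<^bsub>R\<^esub> (s \<otimes>\<^bsub>R\<^esub> s) \<otimes>\<^bsub>R\<^esub> b \<otimes>\<^bsub>R\<^esub> c)"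

definition tr2 :: "('a, 'b) ring_scheme \<Rightarrow> 'a \<times> 'a \<times> 'a \<times> 'a \<Rightarrow> 'a" where
  "tr2 R A = (case A of (a,b,c,d) \<Rightarrow> a \<oplus>\<^bsub>R\<^esub> d)"

end

theory Submission
  imports Defs
begin

lemma (in cring) nonunit_in_maximal:
  assumes x: "x \<in> carrier R" "x \<notin> Units R"
  shows "\<exists>M. maximalideal M R \<and> x \<in> M"
proof -
  let ?A = "{I. ideal I R \<and> x \<in> I \<and> \<one> \<notin> I}"
  have PI: "PIdl x \<in> ?A"
  proof -
    have "ideal (PIdl x) R" using x(1) by (rule cgenideal_ideal)
    moreover have "x \<in> PIdl x" using x(1) by (rule cgenideal_self)
    moreover have "\<one> \<notin> PIdl x"
    proof
      assume "\<one> \<in> PIdl x"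
      then obtain y where y: "y \<in> carrier R" "\<one> = y \<otimes> x" unfolding cgenideal_def by auto
      then have "x \<in> Units R" using x unfolding Units_def by (auto simp: m_comm)
      with x show False by simp
    qed
    ultimately show ?thesis by simp
  qed
  have "\<exists>M\<in>(?A). \<forall>K\<in>(?A). M \<subseteq> K \<longrightarrow> K = M"
  proof (rule subset_Zorn_nonempty)
    show "?A \<noteq> {}" using PI by blast
  next
    fix C assume C: "C \<noteq> {}" "subset.chain ?A C"
    have CA: "C \<subseteq> ?A" and ch: "\<And>I J. I\<in>C \<Longrightarrow> J\<in>C \<Longrightarrow> I \<subseteq> J \<or> J \<subseteq> I"
      using C(2) unfolding pred_on.chain_def by auto
    have sub: "\<Union>C \<subseteq> carrier R" using CA
      by (auto dest: additive_subgroup.a_subset[OF ideal.axioms(1)])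
    have "ideal (\<Union>C) R"
    proof (rule idealI)
      show "ring R" by (rule ring_axioms)
      show "subgroup (\<Union>C) (add_monoid R)"
      proof (rule add.subgroupI, goal_cases)
        case 1 show ?case using sub by simp
      next
        case 2 show ?case using C CA by auto
      next
        case (3 a)
        then have "a \<in> \<Union>C" by simp
        then obtain I where I: "I \<in> C" "a \<in> I" by auto
        then have "\<ominus> a \<in> I" using CA by (auto intro: additive_subgroup.a_inv_closed[OF ideal.axioms(1)])
        then show ?case using I unfolding a_inv_def by auto
      next
        case (4 a b)
        then have "a \<in> \<Union>C" "b \<in> \<Union>C" by auto
        then obtain I J where I: "I \<in> C" "a \<in> I" "J \<in> C" "b \<in> J" by auto
        show ?case
        proof (cases "I \<subseteq> J")
          case True
          then have "a \<oplus> b \<in> J" using I CA by (auto intro: additive_subgroup.a_closed[OF ideal.axioms(1)])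
          then show ?thesis using I by auto
        next
          case False
          then have "J \<subseteq> I" using ch I by blast
          then have "a \<oplus> b \<in> I" using I CA by (auto intro: additive_subgroup.a_closed[OF ideal.axioms(1)])
          then show ?thesis using I by auto
        qed
      qed
    next
      fix a y assume "a \<in> \<Union>C" "y \<in> carrier R"
      then show "y \<otimes> a \<in> \<Union>C" using CA by (auto intro: ideal.I_l_closed)
    next
      fix a y assume "a \<in> \<Union>C" "y \<in> carrier R"
      then show "a \<otimes> y \<in> \<Union>C" using CA by (auto intro: ideal.I_r_closed)
    qed
    then show "\<Union>C \<in> ?A" using C CA by auto
  qed
  then obtain M where M: "M \<in> ?A" "\<And>K. K \<in> ?A \<Longrightarrow> M \<subseteq> K \<Longrightarrow> K = M" by blast
  have "maximalideal M R"
  proof (rule maximalidealI)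
    show "ideal M R" using M by auto
    show "carrier R \<noteq> M" using M by auto
    fix J assume J: "ideal J R" "M \<subseteq> J" "J \<subseteq> carrier R"
    show "J = M \<or> J = carrier R"
    proof (cases "\<one> \<in> J")
      case True then show ?thesis using J ideal.one_imp_carrier by blast
    next
      case False then show ?thesis using J M by auto
    qed
  qed
  then show ?thesis using M by auto
qed

locale loc = cring R for R (structure) +
  fixes M s
  assumes maxM: "maximalideal M R"
    and uniq: "\<And>M'. maximalideal M' R \<Longrightarrow> M' = M"
    and s_carr: "s \<in> carrier R"
begin

lemma M_ideal: "ideal M R" using maxM by (rule maximalideal.axioms(1))
lemma one_notin: "\<one> \<notin> M" proof
  assume "\<one> \<in> M"
  then have "M = carrier R" using ideal.one_imp_carrier[OF M_ideal] by blast
  then show False using maximalideal.I_notcarr[OF maxM] by simp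
qed
lemma M_sub: "M \<subseteq> carrier R" using M_ideal by (rule additive_subgroup.a_subset[OF ideal.axioms(1)])  

lemma nonM_unit: "x \<in> carrier R \<Longrightarrow> x \<notin> M \<Longrightarrow> x \<in> Units R"
  using nonunit_in_maximal uniq by blast


lemma M_add: "a \<in> M \<Longrightarrow> b \<in> M \<Longrightarrow> a \<oplus> b \<in> M"
  using additive_subgroup.a_closed[OF ideal.axioms(1)[OF M_ideal]] by blast
lemma M_neg: "a \<in> M \<Longrightarrow> \<ominus> a \<in> M"
  using additive_subgroup.a_inv_closed[OF ideal.axioms(1)[OF M_ideal]] by blast
lemma M_minus: "a \<in> M \<Longrightarrow> b \<in> M \<Longrightarrow> a \<ominus> b \<in> M"
  unfolding a_minus_def using M_add M_neg by blast
lemma M_lmul: "a \<in> M \<Longrightarrow> x \<in> carrier R \<Longrightarrow> x \<otimes> a \<in> M"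
  using ideal.I_l_closed[OF M_ideal] by blast
lemma M_rmul: "a \<in> M \<Longrightarrow> x \<in> carrier R \<Longrightarrow> a \<otimes> x \<in> M"
  using ideal.I_r_closed[OF M_ideal] by blast
lemma M_zero: "\<zero> \<in> M"
  using additive_subgroup.zero_closed[OF ideal.axioms(1)[OF M_ideal]] by blast
lemma M_carr: "a \<in> M \<Longrightarrow> a \<in> carrier R" using M_sub by blast
lemma unit_notin_M: "u \<in> Units R \<Longrightarrow> u \<notin> M"
proof
  assume u: "u \<in> Units R" "u \<in> M"
  have "inv u \<otimes> u \<in> M" using M_lmul[OF u(2) Units_inv_closed[OF u(1)]] .
  moreover have "inv u \<otimes> u = \<one>" using u(1) by (rule Units_l_inv)
  ultimately show False using one_notin by simp
qed

lemma left_ideal_ideal: assumes "left_ideal I R" shows "ideal I R"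
proof (rule idealI[OF ring_axioms])
  have as: "additive_subgroup I R" and l: "\<And>a x. a\<in>I \<Longrightarrow> x\<in>carrier R \<Longrightarrow> x\<otimes>a\<in>I"
    using assms unfolding left_ideal_def by auto
  show "subgroup I (add_monoid R)" using as by (rule additive_subgroup.a_subgroup)
  show "\<And>a x. a\<in>I \<Longrightarrow> x\<in>carrier R \<Longrightarrow> x\<otimes>a\<in>I" by (rule l)
  fix a x assume ax: "a\<in>I" "x\<in>carrier R"
  have "a \<in> carrier R" using as ax(1) additive_subgroup.a_subset by blast
  then have "a \<otimes> x = x \<otimes> a" using ax(2) by (rule m_comm)
  with l[OF ax] show "a \<otimes> x \<in> I" by (rule_tac ssubst)
qed

lemma ideal_left_ideal: "ideal I R \<Longrightarrow> left_ideal I R"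
  unfolding left_ideal_def
proof (intro conjI ballI)
  assume "ideal I R"
  then show "additive_subgroup I R" by (rule ideal.axioms(1))
  fix a x assume "a \<in> I" "x \<in> carrier R"
  then show "x \<otimes> a \<in> I" using ideal.I_l_closed[OF \<open>ideal I R\<close>] by blast
qed

lemma maxleft_iff: "maximal_left_ideal I R \<longleftrightarrow> maximalideal I R"
proof
  assume a: "maximal_left_ideal I R"
  show "maximalideal I R"
  proof (rule maximalidealI)
    show "ideal I R" using a left_ideal_ideal unfolding maximal_left_ideal_def by blast
    show "carrier R \<noteq> I" using a unfolding maximal_left_ideal_def by auto
    fix J assume "ideal J R" "I \<subseteq> J" "J \<subseteq> carrier R"
    then show "J = I \<or> J = carrier R" using a ideal_left_ideal unfolding maximal_left_ideal_def by blast
  qed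
next
  assume a: "maximalideal I R"
  show "maximal_left_ideal I R" unfolding maximal_left_ideal_def
  proof (intro conjI allI impI)
    show "left_ideal I R" using a ideal_left_ideal maximalideal.axioms(1) by blast
    show "I \<noteq> carrier R" using maximalideal.I_notcarr[OF a] by simp
    fix K assume K: "left_ideal K R \<and> I \<subseteq> K"
    then have "ideal K R" using left_ideal_ideal by blast
    moreover have "K \<subseteq> carrier R" using K additive_subgroup.a_subset unfolding left_ideal_def by blast
    ultimately show "K = I \<or> K = carrier R" using a K maximalideal.I_maximal by blast
  qed
qed

lemma jac_R: "jacobson R = M"
proof -
  have "{I. maximal_left_ideal I R} = {M}" using maxleft_iff maxM uniq by blast
  then show ?thesis unfolding jacobson_def using M_sub by auto
qed

end

lemma left_idealD:
  assumes "left_ideal L R"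
  shows "L \<subseteq> carrier R" "\<zero>\<^bsub>R\<^esub> \<in> L" "\<And>a b. a\<in>L \<Longrightarrow> b\<in>L \<Longrightarrow> a \<oplus>\<^bsub>R\<^esub> b \<in> L"
    "\<And>a. a\<in>L \<Longrightarrow> \<ominus>\<^bsub>R\<^esub> a \<in> L" "\<And>a x. a\<in>L \<Longrightarrow> x\<in>carrier R \<Longrightarrow> x \<otimes>\<^bsub>R\<^esub> a \<in> L"
proof -
  have as: "additive_subgroup L R" using assms unfolding left_ideal_def by simp
  show "L \<subseteq> carrier R" by (rule additive_subgroup.a_subset[OF as])
  show "\<zero>\<^bsub>R\<^esub> \<in> L" by (rule additive_subgroup.zero_closed[OF as])
  show "\<And>a b. a\<in>L \<Longrightarrow> b\<in>L \<Longrightarrow> a \<oplus>\<^bsub>R\<^esub> b \<in> L" by (rule additive_subgroup.a_closed[OF as])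
  show "\<And>a. a\<in>L \<Longrightarrow> \<ominus>\<^bsub>R\<^esub> a \<in> L" by (rule additive_subgroup.a_inv_closed[OF as])
  show "\<And>a x. a\<in>L \<Longrightarrow> x\<in>carrier R \<Longrightarrow> x \<otimes>\<^bsub>R\<^esub> a \<in> L" using assms unfolding left_ideal_def by blast
qed

lemma (in ring) left_idealI:
  assumes "L \<subseteq> carrier R" "\<zero> \<in> L" "\<And>a b. a \<in> L \<Longrightarrow> b \<in> L \<Longrightarrow> a \<oplus> b \<in> L"
    "\<And>a. a \<in> L \<Longrightarrow> \<ominus> a \<in> L" "\<And>a x. a \<in> L \<Longrightarrow> x \<in> carrier R \<Longrightarrow> x \<otimes> a \<in> L"
  shows "left_ideal L R"
  unfolding left_ideal_def
proof (intro conjI ballI)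
  show "additive_subgroup L R"
  proof (rule additive_subgroupI, rule add.subgroupI, goal_cases)
    case 1 then show ?case using assms(1) by simp
  next
    case 2 then show ?case using assms(2) by blast
  next
    case (3 a) then show ?case using assms(4) unfolding a_inv_def by simp
  next
    case (4 a b) then show ?case using assms(3) by simp
  qed
next
  fix a x assume "a \<in> L" "x \<in> carrier R" then show "x \<otimes> a \<in> L" by (rule assms(5))
qed

lemma (in ring) left_ideal_one:
  assumes "left_ideal K R" "\<one> \<in> K" shows "K = carrier R"
proof
  show "K \<subseteq> carrier R" by (rule left_idealD(1)[OF assms(1)])
  show "carrier R \<subseteq> K"
  proof
    fix z assume z: "z \<in> carrier R"
    have "z \<otimes> \<one> \<in> K" by (rule left_idealD(5)[OF assms(1) assms(2) z])
    then show "z \<in> K" using z by simp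
  qed
qed

lemma (in ring) maximal_left_idealI:
  assumes L: "left_ideal L R" "\<one> \<notin> L"
    and ex: "\<And>x. x \<in> carrier R \<Longrightarrow> x \<notin> L \<Longrightarrow> \<exists>y\<in>carrier R. \<exists>l\<in>L. y \<otimes> x \<oplus> l = \<one>"
  shows "maximal_left_ideal L R"
  unfolding maximal_left_ideal_def
proof (intro conjI allI impI)
  show "left_ideal L R" by fact
  show "L \<noteq> carrier R" using L(2) by auto
  fix K assume K: "left_ideal K R \<and> L \<subseteq> K"
  show "K = L \<or> K = carrier R"
  proof (cases "K = L")
    case False
    then obtain x where x: "x \<in> K" "x \<notin> L" using K by blast
    have Kl: "left_ideal K R" using K by simp
    have xc: "x \<in> carrier R" using left_idealD(1)[OF Kl] x(1) by blast
    obtain y l where yl: "y \<in> carrier R" "l \<in> L" "y \<otimes> x \<oplus> l = \<one>" using ex[OF xc x(2)] by blast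
    have "y \<otimes> x \<in> K" by (rule left_idealD(5)[OF Kl x(1) yl(1)])
    moreover have "l \<in> K" using K yl by blast
    ultimately have "y \<otimes> x \<oplus> l \<in> K" by (rule left_idealD(3)[OF Kl])
    then have "\<one> \<in> K" using yl by simp
    then show ?thesis using left_ideal_one[OF Kl] by blast
  qed simp
qed

lemma (in ring) in_jacobsonI:
  assumes u: "u \<in> carrier R"
    and inv: "\<And>t. t \<in> carrier R \<Longrightarrow> \<exists>v\<in>carrier R. v \<otimes> (\<one> \<ominus> t \<otimes> u) = \<one>"
  shows "u \<in> jacobson R"
  unfolding jacobson_def
proof (intro IntI InterI, rule u, clarify)
  fix L assume L: "maximal_left_ideal L R"
  then have Ll: "left_ideal L R" and Lne: "L \<noteq> carrier R"
    and Lmax: "\<And>K. left_ideal K R \<Longrightarrow> L \<subseteq> K \<Longrightarrow> K = L \<or> K = carrier R"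
    unfolding maximal_left_ideal_def by auto
  note Lsub = left_idealD(1)[OF Ll] and Lz = left_idealD(2)[OF Ll] and Ladd = left_idealD(3)[OF Ll]
    and Lneg = left_idealD(4)[OF Ll] and Lmul = left_idealD(5)[OF Ll]
  show "u \<in> L"
  proof (rule ccontr)
    assume uL: "u \<notin> L"
    define K where "K = {l \<oplus> t \<otimes> u | l t. l \<in> L \<and> t \<in> carrier R}"
    have "left_ideal K R"
    proof (rule left_idealI)
      show "K \<subseteq> carrier R" unfolding K_def using Lsub u by auto
      have "\<zero> = \<zero> \<oplus> \<zero> \<otimes> u" using u by simp
      then show "\<zero> \<in> K" unfolding K_def using Lz by blast
    next
      fix a b assume "a \<in> K" "b \<in> K"
      then obtain l t l' t' where h: "l \<in> L" "t \<in> carrier R" "l' \<in> L" "t' \<in> carrier R"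
        "a = l \<oplus> t \<otimes> u" "b = l' \<oplus> t' \<otimes> u" unfolding K_def by blast
      have c: "l \<in> carrier R" "l' \<in> carrier R" using h Lsub by auto
      have "a \<oplus> b = (l \<oplus> l') \<oplus> (t \<oplus> t') \<otimes> u" unfolding h(5,6) using u c h(2,4) by algebra
      moreover have "l \<oplus> l' \<in> L" using Ladd h by blast
      moreover have "t \<oplus> t' \<in> carrier R" using h by simp
      ultimately show "a \<oplus> b \<in> K" unfolding K_def by blast
    next
      fix a assume "a \<in> K"
      then obtain l t where h: "l \<in> L" "t \<in> carrier R" "a = l \<oplus> t \<otimes> u" unfolding K_def by blast
      have c: "l \<in> carrier R" using h Lsub by auto
      have "\<ominus> a = (\<ominus> l) \<oplus> (\<ominus> t) \<otimes> u" unfolding h(3) using u c h(2) by algebra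
      moreover have "\<ominus> l \<in> L" using Lneg h by blast
      moreover have "\<ominus> t \<in> carrier R" using h by simp
      ultimately show "\<ominus> a \<in> K" unfolding K_def by blast
    next
      fix a x assume ax: "a \<in> K" "x \<in> carrier R"
      then obtain l t where h: "l \<in> L" "t \<in> carrier R" "a = l \<oplus> t \<otimes> u" unfolding K_def by blast
      have c: "l \<in> carrier R" using h Lsub by auto
      have "x \<otimes> a = (x \<otimes> l) \<oplus> (x \<otimes> t) \<otimes> u" unfolding h(3) using u c h(2) ax(2) by algebra
      moreover have "x \<otimes> l \<in> L" using Lmul h ax by blast
      moreover have "x \<otimes> t \<in> carrier R" using h ax by simp
      ultimately show "x \<otimes> a \<in> K" unfolding K_def by blast
    qed
    moreover have "L \<subseteq> K"
    proof
      fix l assume l: "l \<in> L"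
      then have "l = l \<oplus> \<zero> \<otimes> u" using u Lsub by auto
      then show "l \<in> K" unfolding K_def using l by blast
    qed
    moreover have "u \<in> K"
    proof -
      have "u = \<zero> \<oplus> \<one> \<otimes> u" using u by simp
      then show ?thesis unfolding K_def using Lz by blast
    qed
    ultimately have "K = carrier R" using Lmax uL by blast
    then have "\<one> \<in> K" by simp
    then obtain l t where lt: "l \<in> L" "t \<in> carrier R" "\<one> = l \<oplus> t \<otimes> u" unfolding K_def by blast
    have c: "l \<in> carrier R" using lt Lsub by auto
    have "\<one> \<ominus> t \<otimes> u = l" unfolding lt(3) using c lt(2) u by algebra
    moreover obtain v where v: "v \<in> carrier R" "v \<otimes> (\<one> \<ominus> t \<otimes> u) = \<one>" using inv lt by blast
    ultimately have "v \<otimes> l = \<one>" by simp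
    moreover have "v \<otimes> l \<in> L" using Lmul lt(1) v(1) by blast
    ultimately have "\<one> \<in> L" by simp
    then show False using left_ideal_one Ll Lne by blast
  qed
qed

context loc begin

abbreviation "T \<equiv> M2s R s"

lemma T_carrier: "(a,b,c,d) \<in> carrier T \<longleftrightarrow> a \<in> carrier R \<and> b \<in> carrier R \<and> c \<in> carrier R \<and> d \<in> carrier R"
  by (simp add: M2s_def)
lemma T_mult: "(a,b,c,d) \<otimes>\<^bsub>T\<^esub> (a',b',c',d') =
   (a \<otimes> a' \<oplus> (s \<otimes> s) \<otimes> b \<otimes> c', a \<otimes> b' \<oplus> b \<otimes> d', c \<otimes> a' \<oplus> d \<otimes> c', (s \<otimes> s) \<otimes> c \<otimes> b' \<oplus> d \<otimes> d')"
  by (simp add: M2s_def m2_mult_def)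
lemma T_add: "(a,b,c,d) \<oplus>\<^bsub>T\<^esub> (a',b',c',d') = (a \<oplus> a', b \<oplus> b', c \<oplus> c', d \<oplus> d')"
  by (simp add: M2s_def m2_add_def)
lemma T_one: "\<one>\<^bsub>T\<^esub> = (\<one>,\<zero>,\<zero>,\<one>)" by (simp add: M2s_def)
lemma T_zero: "\<zero>\<^bsub>T\<^esub> = (\<zero>,\<zero>,\<zero>,\<zero>)" by (simp add: M2s_def)

lemma ring_T: "ring T"
proof (rule ringI)
  show "abelian_group T"
  proof (rule abelian_groupI)
    show "\<And>x y. x \<in> carrier T \<Longrightarrow> y \<in> carrier T \<Longrightarrow> x \<oplus>\<^bsub>T\<^esub> y \<in> carrier T"
      unfolding split_paired_all T_carrier T_add by simp
    show "\<zero>\<^bsub>T\<^esub> \<in> carrier T" unfolding T_zero T_carrier by simp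
    show "\<And>x y z. x \<in> carrier T \<Longrightarrow> y \<in> carrier T \<Longrightarrow> z \<in> carrier T \<Longrightarrow>
       x \<oplus>\<^bsub>T\<^esub> y \<oplus>\<^bsub>T\<^esub> z = x \<oplus>\<^bsub>T\<^esub> (y \<oplus>\<^bsub>T\<^esub> z)"
      unfolding split_paired_all T_carrier T_add by (simp add: a_assoc)
    show "\<And>x y. x \<in> carrier T \<Longrightarrow> y \<in> carrier T \<Longrightarrow> x \<oplus>\<^bsub>T\<^esub> y = y \<oplus>\<^bsub>T\<^esub> x"
      unfolding split_paired_all T_carrier T_add by (simp add: a_comm)
    show "\<And>x. x \<in> carrier T \<Longrightarrow> \<zero>\<^bsub>T\<^esub> \<oplus>\<^bsub>T\<^esub> x = x"
      unfolding split_paired_all T_carrier T_add T_zero by simp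
    show "\<And>x. x \<in> carrier T \<Longrightarrow> \<exists>y\<in>carrier T. y \<oplus>\<^bsub>T\<^esub> x = \<zero>\<^bsub>T\<^esub>"
      unfolding split_paired_all
    proof -
      fix a b c d assume h: "(a,b,c,d) \<in> carrier T"
      show "\<exists>y\<in>carrier T. y \<oplus>\<^bsub>T\<^esub> (a,b,c,d) = \<zero>\<^bsub>T\<^esub>"
        by (rule bexI[of _ "(\<ominus>a,\<ominus>b,\<ominus>c,\<ominus>d)"]) (use h in \<open>simp_all add: T_carrier T_add T_zero l_neg\<close>)
    qed
  qed
  show "monoid T"
  proof (rule monoidI)
    show "\<And>x y. x \<in> carrier T \<Longrightarrow> y \<in> carrier T \<Longrightarrow> x \<otimes>\<^bsub>T\<^esub> y \<in> carrier T"
      unfolding split_paired_all T_carrier T_mult using s_carr by simp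
    show "\<one>\<^bsub>T\<^esub> \<in> carrier T" unfolding T_one T_carrier by simp
    show "\<And>x y z. x \<in> carrier T \<Longrightarrow> y \<in> carrier T \<Longrightarrow> z \<in> carrier T \<Longrightarrow>
       x \<otimes>\<^bsub>T\<^esub> y \<otimes>\<^bsub>T\<^esub> z = x \<otimes>\<^bsub>T\<^esub> (y \<otimes>\<^bsub>T\<^esub> z)"
      unfolding split_paired_all T_carrier T_mult prod.inject using s_carr
      by (intro conjI; elim conjE; algebra)
    show "\<And>x. x \<in> carrier T \<Longrightarrow> \<one>\<^bsub>T\<^esub> \<otimes>\<^bsub>T\<^esub> x = x"
      unfolding split_paired_all T_carrier T_mult T_one using s_carr by simp
    show "\<And>x. x \<in> carrier T \<Longrightarrow> x \<otimes>\<^bsub>T\<^esub> \<one>\<^bsub>T\<^esub> = x"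
      unfolding split_paired_all T_carrier T_mult T_one using s_carr by simp
  qed
  show "\<And>x y z. x \<in> carrier T \<Longrightarrow> y \<in> carrier T \<Longrightarrow> z \<in> carrier T \<Longrightarrow>
       (x \<oplus>\<^bsub>T\<^esub> y) \<otimes>\<^bsub>T\<^esub> z = x \<otimes>\<^bsub>T\<^esub> z \<oplus>\<^bsub>T\<^esub> y \<otimes>\<^bsub>T\<^esub> z"
    unfolding split_paired_all T_carrier T_mult T_add prod.inject using s_carr
    by (intro conjI; elim conjE; algebra)
  show "\<And>x y z. x \<in> carrier T \<Longrightarrow> y \<in> carrier T \<Longrightarrow> z \<in> carrier T \<Longrightarrow>
       z \<otimes>\<^bsub>T\<^esub> (x \<oplus>\<^bsub>T\<^esub> y) = z \<otimes>\<^bsub>T\<^esub> x \<oplus>\<^bsub>T\<^esub> z \<otimes>\<^bsub>T\<^esub> y"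
    unfolding split_paired_all T_carrier T_mult T_add prod.inject using s_carr
    by (intro conjI; elim conjE; algebra)
qed


lemma T_neg: "(a,b,c,d) \<in> carrier T \<Longrightarrow> \<ominus>\<^bsub>T\<^esub> (a,b,c,d) = (\<ominus>a,\<ominus>b,\<ominus>c,\<ominus>d)"
  by (rule abelian_group.minus_equality[OF ring.is_abelian_group[OF ring_T]])
     (simp_all add: T_add T_zero T_carrier l_neg)

lemma T_minus: "(a,b,c,d) \<in> carrier T \<Longrightarrow> (a',b',c',d') \<in> carrier T \<Longrightarrow>
   (a,b,c,d) \<ominus>\<^bsub>T\<^esub> (a',b',c',d') = (a \<ominus> a', b \<ominus> b', c \<ominus> c', d \<ominus> d')"
  unfolding a_minus_def by (simp add: T_neg T_add)

definition L1 where "L1 = {(a,b,c,d). (a,b,c,d) \<in> carrier T \<and> a \<in> M \<and> s \<otimes> c \<in> M}"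
definition L2 where "L2 = {(a,b,c,d). (a,b,c,d) \<in> carrier T \<and> d \<in> M \<and> s \<otimes> b \<in> M}"
definition N where "N = {(a,b,c,d). (a,b,c,d) \<in> carrier T \<and> a \<in> M \<and> d \<in> M \<and> s \<otimes> b \<in> M \<and> s \<otimes> c \<in> M}"

lemma N_L: "N = L1 \<inter> L2" unfolding N_def L1_def L2_def by auto

lemma sM: "x \<in> M \<Longrightarrow> s \<otimes> x \<in> M" using M_lmul s_carr by blast

lemma left_L1: "left_ideal L1 T"
proof (rule ring.left_idealI[OF ring_T])
  show "L1 \<subseteq> carrier T" unfolding L1_def by auto
  show "\<zero>\<^bsub>T\<^esub> \<in> L1" unfolding L1_def T_zero using M_zero s_carr by (simp add: T_carrier)
  show "\<And>x y. x \<in> L1 \<Longrightarrow> y \<in> L1 \<Longrightarrow> x \<oplus>\<^bsub>T\<^esub> y \<in> L1"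
    unfolding split_paired_all L1_def T_add using s_carr
    by (auto simp: T_carrier r_distr intro!: M_add)
  show "\<And>x. x \<in> L1 \<Longrightarrow> \<ominus>\<^bsub>T\<^esub> x \<in> L1"
    unfolding split_paired_all L1_def using s_carr
    by (auto simp: T_carrier T_neg r_minus intro!: M_neg)
  show "\<And>x y. x \<in> L1 \<Longrightarrow> y \<in> carrier T \<Longrightarrow> y \<otimes>\<^bsub>T\<^esub> x \<in> L1"
    unfolding split_paired_all
  proof -
    fix a b c d p q r t assume h: "(a,b,c,d) \<in> L1" "(p,q,r,t) \<in> carrier T"
    then have c: "a \<in> carrier R" "b \<in> carrier R" "c \<in> carrier R" "d \<in> carrier R"
      "p \<in> carrier R" "q \<in> carrier R" "r \<in> carrier R" "t \<in> carrier R" and m: "a \<in> M" "s \<otimes> c \<in> M"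
      unfolding L1_def by (auto simp: T_carrier)
    have e1: "p \<otimes> a \<oplus> s \<otimes> s \<otimes> q \<otimes> c = p \<otimes> a \<oplus> (s \<otimes> q) \<otimes> (s \<otimes> c)" using c s_carr by algebra
    have e2: "s \<otimes> (r \<otimes> a \<oplus> t \<otimes> c) = (s \<otimes> r) \<otimes> a \<oplus> t \<otimes> (s \<otimes> c)" using c s_carr by algebra
    have "p \<otimes> a \<oplus> (s \<otimes> q) \<otimes> (s \<otimes> c) \<in> M" using m c s_carr by (auto intro!: M_add M_lmul)
    moreover have "(s \<otimes> r) \<otimes> a \<oplus> t \<otimes> (s \<otimes> c) \<in> M" using m c s_carr by (auto intro!: M_add M_lmul)
    ultimately show "(p,q,r,t) \<otimes>\<^bsub>T\<^esub> (a,b,c,d) \<in> L1"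
      unfolding T_mult L1_def using e1 e2 c s_carr by (simp add: T_carrier)
  qed
qed

lemma left_L2: "left_ideal L2 T"
proof (rule ring.left_idealI[OF ring_T])
  show "L2 \<subseteq> carrier T" unfolding L2_def by auto
  show "\<zero>\<^bsub>T\<^esub> \<in> L2" unfolding L2_def T_zero using M_zero s_carr by (simp add: T_carrier)
  show "\<And>x y. x \<in> L2 \<Longrightarrow> y \<in> L2 \<Longrightarrow> x \<oplus>\<^bsub>T\<^esub> y \<in> L2"
    unfolding split_paired_all L2_def T_add using s_carr
    by (auto simp: T_carrier r_distr intro!: M_add)
  show "\<And>x. x \<in> L2 \<Longrightarrow> \<ominus>\<^bsub>T\<^esub> x \<in> L2"
    unfolding split_paired_all L2_def using s_carr
    by (auto simp: T_carrier T_neg r_minus intro!: M_neg)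
  show "\<And>x y. x \<in> L2 \<Longrightarrow> y \<in> carrier T \<Longrightarrow> y \<otimes>\<^bsub>T\<^esub> x \<in> L2"
    unfolding split_paired_all
  proof -
    fix a b c d p q r t assume h: "(a,b,c,d) \<in> L2" "(p,q,r,t) \<in> carrier T"
    then have c: "a \<in> carrier R" "b \<in> carrier R" "c \<in> carrier R" "d \<in> carrier R"
      "p \<in> carrier R" "q \<in> carrier R" "r \<in> carrier R" "t \<in> carrier R" and m: "d \<in> M" "s \<otimes> b \<in> M"
      unfolding L2_def by (auto simp: T_carrier)
    have e1: "s \<otimes> s \<otimes> r \<otimes> b \<oplus> t \<otimes> d = (s \<otimes> r) \<otimes> (s \<otimes> b) \<oplus> t \<otimes> d" using c s_carr by algebra
    have e2: "s \<otimes> (p \<otimes> b \<oplus> q \<otimes> d) = p \<otimes> (s \<otimes> b) \<oplus> (s \<otimes> q) \<otimes> d" using c s_carr by algebra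
    have "(s \<otimes> r) \<otimes> (s \<otimes> b) \<oplus> t \<otimes> d \<in> M" using m c s_carr by (auto intro!: M_add M_lmul)
    moreover have "p \<otimes> (s \<otimes> b) \<oplus> (s \<otimes> q) \<otimes> d \<in> M" using m c s_carr by (auto intro!: M_add M_lmul)
    ultimately show "(p,q,r,t) \<otimes>\<^bsub>T\<^esub> (a,b,c,d) \<in> L2"
      unfolding T_mult L2_def using e1 e2 c s_carr by (simp add: T_carrier)
  qed
qed


lemma max_L1: "maximal_left_ideal L1 T"
proof (rule ring.maximal_left_idealI[OF ring_T left_L1])
  show "\<one>\<^bsub>T\<^esub> \<notin> L1" unfolding T_one L1_def using one_notin by simp
  show "\<And>x. x \<in> carrier T \<Longrightarrow> x \<notin> L1 \<Longrightarrow> \<exists>y\<in>carrier T. \<exists>l\<in>L1. y \<otimes>\<^bsub>T\<^esub> x \<oplus>\<^bsub>T\<^esub> l = \<one>\<^bsub>T\<^esub>"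
    unfolding split_paired_all
  proof -
    fix a b c d assume h: "(a,b,c,d) \<in> carrier T" "(a,b,c,d) \<notin> L1"
    then have c: "a \<in> carrier R" "b \<in> carrier R" "c \<in> carrier R" "d \<in> carrier R"
      by (auto simp: T_carrier)
    have "a \<notin> M \<or> s \<otimes> c \<notin> M" using h unfolding L1_def by auto
    then show "\<exists>y\<in>carrier T. \<exists>l\<in>L1. y \<otimes>\<^bsub>T\<^esub> (a,b,c,d) \<oplus>\<^bsub>T\<^esub> l = \<one>\<^bsub>T\<^esub>"
    proof
      assume "a \<notin> M"
      then have u: "a \<in> Units R" using nonM_unit c by blast
      have ic: "inv a \<in> carrier R" using u by simp
      show ?thesis
      proof (intro bexI)
        show "(inv a, \<zero>, \<zero>, \<zero>) \<otimes>\<^bsub>T\<^esub> (a,b,c,d) \<oplus>\<^bsub>T\<^esub> (\<zero>, \<ominus> (inv a \<otimes> b), \<zero>, \<one>) = \<one>\<^bsub>T\<^esub>"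
          unfolding T_mult T_add T_one using c ic s_carr u by (simp add: Units_l_inv r_neg)
        show "(inv a, \<zero>, \<zero>, \<zero>) \<in> carrier T" using ic by (simp add: T_carrier)
        show "(\<zero>, \<ominus> (inv a \<otimes> b), \<zero>, \<one>) \<in> L1" unfolding L1_def using ic c s_carr M_zero by (simp add: T_carrier)
      qed
    next
      assume sc: "s \<otimes> c \<notin> M"
      then have "s \<notin> M" using M_rmul c by blast
      then have us: "s \<in> Units R" using nonM_unit s_carr by blast
      have usc: "s \<otimes> c \<in> Units R" using nonM_unit sc c s_carr by simp
      define w where "w = s \<otimes> (s \<otimes> c)"
      have u: "w \<in> Units R" unfolding w_def using us usc by (rule Units_m_closed)
      have ic: "inv w \<in> carrier R" using u by simp
      have e: "s \<otimes> s \<otimes> inv w \<otimes> c = inv w \<otimes> (s \<otimes> (s \<otimes> c))" using ic c s_carr by algebra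
      have e0: "inv w \<otimes> (s \<otimes> (s \<otimes> c)) = \<one>" using Units_l_inv[OF u] unfolding w_def .
      have e1: "s \<otimes> s \<otimes> inv w \<otimes> c = \<one>" using e e0 by simp
      show ?thesis
      proof (intro bexI)
        show "(\<zero>, inv w, \<zero>, \<zero>) \<otimes>\<^bsub>T\<^esub> (a,b,c,d) \<oplus>\<^bsub>T\<^esub> (\<zero>, \<ominus> (inv w \<otimes> d), \<zero>, \<one>) = \<one>\<^bsub>T\<^esub>"
          unfolding T_mult T_add T_one using c ic s_carr e1 by (simp add: r_neg)
        show "(\<zero>, inv w, \<zero>, \<zero>) \<in> carrier T" using ic by (simp add: T_carrier)
        show "(\<zero>, \<ominus> (inv w \<otimes> d), \<zero>, \<one>) \<in> L1" unfolding L1_def using ic c s_carr M_zero by (simp add: T_carrier)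
      qed
    qed
  qed
qed

lemma max_L2: "maximal_left_ideal L2 T"
proof (rule ring.maximal_left_idealI[OF ring_T left_L2])
  show "\<one>\<^bsub>T\<^esub> \<notin> L2" unfolding T_one L2_def using one_notin by simp
  show "\<And>x. x \<in> carrier T \<Longrightarrow> x \<notin> L2 \<Longrightarrow> \<exists>y\<in>carrier T. \<exists>l\<in>L2. y \<otimes>\<^bsub>T\<^esub> x \<oplus>\<^bsub>T\<^esub> l = \<one>\<^bsub>T\<^esub>"
    unfolding split_paired_all
  proof -
    fix a b c d assume h: "(a,b,c,d) \<in> carrier T" "(a,b,c,d) \<notin> L2"
    then have c: "a \<in> carrier R" "b \<in> carrier R" "c \<in> carrier R" "d \<in> carrier R"
      by (auto simp: T_carrier)
    have "d \<notin> M \<or> s \<otimes> b \<notin> M" using h unfolding L2_def by auto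
    then show "\<exists>y\<in>carrier T. \<exists>l\<in>L2. y \<otimes>\<^bsub>T\<^esub> (a,b,c,d) \<oplus>\<^bsub>T\<^esub> l = \<one>\<^bsub>T\<^esub>"
    proof
      assume "d \<notin> M"
      then have u: "d \<in> Units R" using nonM_unit c by blast
      have ic: "inv d \<in> carrier R" using u by simp
      show ?thesis
      proof (intro bexI)
        show "(\<zero>, \<zero>, \<zero>, inv d) \<otimes>\<^bsub>T\<^esub> (a,b,c,d) \<oplus>\<^bsub>T\<^esub> (\<one>, \<zero>, \<ominus> (inv d \<otimes> c), \<zero>) = \<one>\<^bsub>T\<^esub>"
          unfolding T_mult T_add T_one using c ic s_carr u by (simp add: Units_l_inv r_neg)
        show "(\<zero>, \<zero>, \<zero>, inv d) \<in> carrier T" using ic by (simp add: T_carrier)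
        show "(\<one>, \<zero>, \<ominus> (inv d \<otimes> c), \<zero>) \<in> L2" unfolding L2_def using ic c s_carr M_zero by (simp add: T_carrier)
      qed
    next
      assume sc: "s \<otimes> b \<notin> M"
      then have "s \<notin> M" using M_rmul c by blast
      then have us: "s \<in> Units R" using nonM_unit s_carr by blast
      have usc: "s \<otimes> b \<in> Units R" using nonM_unit sc c s_carr by simp
      define w where "w = s \<otimes> (s \<otimes> b)"
      have u: "w \<in> Units R" unfolding w_def using us usc by (rule Units_m_closed)
      have ic: "inv w \<in> carrier R" using u by simp
      have e: "s \<otimes> s \<otimes> inv w \<otimes> b = inv w \<otimes> (s \<otimes> (s \<otimes> b))" using ic c s_carr by algebra
      have e0: "inv w \<otimes> (s \<otimes> (s \<otimes> b)) = \<one>" using Units_l_inv[OF u] unfolding w_def .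
      have e1: "s \<otimes> s \<otimes> inv w \<otimes> b = \<one>" using e e0 by simp
      show ?thesis
      proof (intro bexI)
        show "(\<zero>, \<zero>, inv w, \<zero>) \<otimes>\<^bsub>T\<^esub> (a,b,c,d) \<oplus>\<^bsub>T\<^esub> (\<one>, \<zero>, \<ominus> (inv w \<otimes> a), \<zero>) = \<one>\<^bsub>T\<^esub>"
          unfolding T_mult T_add T_one using c ic s_carr e1 by (simp add: r_neg)
        show "(\<zero>, \<zero>, inv w, \<zero>) \<in> carrier T" using ic by (simp add: T_carrier)
        show "(\<one>, \<zero>, \<ominus> (inv w \<otimes> a), \<zero>) \<in> L2" unfolding L2_def using ic c s_carr M_zero by (simp add: T_carrier)
      qed
    qed
  qed
qed

lemma jac_T_sub: "jacobson T \<subseteq> N"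
  unfolding N_L jacobson_def using max_L1 max_L2 by blast


lemma inv_T:
  assumes X: "(x1,x2,x3,x4) \<in> carrier T" and U: "x1 \<otimes> x4 \<ominus> s \<otimes> s \<otimes> x2 \<otimes> x3 \<in> Units R"
  shows "\<exists>v\<in>carrier T. v \<otimes>\<^bsub>T\<^esub> (x1,x2,x3,x4) = \<one>\<^bsub>T\<^esub>"
proof -
  have c: "x1 \<in> carrier R" "x2 \<in> carrier R" "x3 \<in> carrier R" "x4 \<in> carrier R" using X by (auto simp: T_carrier)
  obtain i where i: "i \<in> carrier R" "i \<otimes> (x1 \<otimes> x4 \<ominus> s \<otimes> s \<otimes> x2 \<otimes> x3) = \<one>"
    using U Units_l_inv Units_inv_closed by blast
  have e1: "i \<otimes> x4 \<otimes> x1 \<oplus> s \<otimes> s \<otimes> (i \<otimes> \<ominus> x2) \<otimes> x3 = i \<otimes> (x1 \<otimes> x4 \<ominus> s \<otimes> s \<otimes> x2 \<otimes> x3)"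
    using c i(1) s_carr by algebra
  have e2: "i \<otimes> x4 \<otimes> x2 \<oplus> (i \<otimes> \<ominus> x2) \<otimes> x4 = \<zero>" using c i(1) s_carr by algebra
  have e3: "(i \<otimes> \<ominus> x3) \<otimes> x1 \<oplus> (i \<otimes> x1) \<otimes> x3 = \<zero>" using c i(1) s_carr by algebra
  have e4: "s \<otimes> s \<otimes> (i \<otimes> \<ominus> x3) \<otimes> x2 \<oplus> (i \<otimes> x1) \<otimes> x4 = i \<otimes> (x1 \<otimes> x4 \<ominus> s \<otimes> s \<otimes> x2 \<otimes> x3)"
    using c i(1) s_carr by algebra
  show ?thesis
  proof (intro bexI)
    show "(i \<otimes> x4, i \<otimes> \<ominus> x2, i \<otimes> \<ominus> x3, i \<otimes> x1) \<otimes>\<^bsub>T\<^esub> (x1,x2,x3,x4) = \<one>\<^bsub>T\<^esub>"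
      unfolding T_mult T_one using e1 e2 e3 e4 i(2) by simp
    show "(i \<otimes> x4, i \<otimes> \<ominus> x2, i \<otimes> \<ominus> x3, i \<otimes> x1) \<in> carrier T" using c i(1) by (simp add: T_carrier)
  qed
qed

lemma jac_T_sup: "N \<subseteq> jacobson T"
proof
  fix u assume uN: "u \<in> N"
  have uc: "u \<in> carrier T" using uN unfolding N_def by auto
  show "u \<in> jacobson T"
  proof (rule ring.in_jacobsonI[OF ring_T uc])
    fix t assume tc: "t \<in> carrier T"
    have "t \<otimes>\<^bsub>T\<^esub> u \<in> N" using left_idealD(5)[OF left_L1] left_idealD(5)[OF left_L2] uN tc N_L by blast
    moreover obtain w1 w2 w3 w4 where w: "t \<otimes>\<^bsub>T\<^esub> u = (w1,w2,w3,w4)" by (metis prod_cases4)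
    ultimately have wN: "(w1,w2,w3,w4) \<in> N" by simp
    then have c: "w1 \<in> carrier R" "w2 \<in> carrier R" "w3 \<in> carrier R" "w4 \<in> carrier R"
      and m: "w1 \<in> M" "w4 \<in> M" "s \<otimes> w2 \<in> M" "s \<otimes> w3 \<in> M"
      unfolding N_def by (auto simp: T_carrier)
    have X: "\<one>\<^bsub>T\<^esub> \<ominus>\<^bsub>T\<^esub> t \<otimes>\<^bsub>T\<^esub> u = (\<one> \<ominus> w1, \<zero> \<ominus> w2, \<zero> \<ominus> w3, \<one> \<ominus> w4)"
      unfolding w T_one by (rule T_minus) (use c in \<open>simp_all add: T_carrier\<close>)
    have Xc: "(\<one> \<ominus> w1, \<zero> \<ominus> w2, \<zero> \<ominus> w3, \<one> \<ominus> w4) \<in> carrier T" using c by (simp add: T_carrier)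
    define m0 where "m0 = w1 \<oplus> w4 \<ominus> w1 \<otimes> w4 \<oplus> (s \<otimes> w2) \<otimes> (s \<otimes> w3)"
    have m0M: "m0 \<in> M" unfolding m0_def using m c s_carr by (auto intro!: M_add M_minus M_rmul M_lmul)
    have id: "((\<one> \<ominus> w1) \<otimes> (\<one> \<ominus> w4) \<ominus> s \<otimes> s \<otimes> (\<zero> \<ominus> w2) \<otimes> (\<zero> \<ominus> w3)) \<oplus> m0 = \<one>"
      unfolding m0_def using c s_carr by algebra
    have dc: "(\<one> \<ominus> w1) \<otimes> (\<one> \<ominus> w4) \<ominus> s \<otimes> s \<otimes> (\<zero> \<ominus> w2) \<otimes> (\<zero> \<ominus> w3) \<in> carrier R"
      using c s_carr by simp
    have "(\<one> \<ominus> w1) \<otimes> (\<one> \<ominus> w4) \<ominus> s \<otimes> s \<otimes> (\<zero> \<ominus> w2) \<otimes> (\<zero> \<ominus> w3) \<notin> M"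
    proof
      assume "(\<one> \<ominus> w1) \<otimes> (\<one> \<ominus> w4) \<ominus> s \<otimes> s \<otimes> (\<zero> \<ominus> w2) \<otimes> (\<zero> \<ominus> w3) \<in> M"
      then have "\<one> \<in> M" using M_add[OF _ m0M] id by metis
      then show False using one_notin by simp
    qed
    then have "(\<one> \<ominus> w1) \<otimes> (\<one> \<ominus> w4) \<ominus> s \<otimes> s \<otimes> (\<zero> \<ominus> w2) \<otimes> (\<zero> \<ominus> w3) \<in> Units R"
      using nonM_unit dc by blast
    then show "\<exists>v\<in>carrier T. v \<otimes>\<^bsub>T\<^esub> (\<one>\<^bsub>T\<^esub> \<ominus>\<^bsub>T\<^esub> t \<otimes>\<^bsub>T\<^esub> u) = \<one>\<^bsub>T\<^esub>"
      unfolding X by (rule inv_T[OF Xc])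
  qed
qed

lemma jac_T: "jacobson T = N" using jac_T_sub jac_T_sup by blast


lemma main:
  assumes A: "A \<in> carrier T"
  shows "(det_s R s A \<in> M \<and> tr2 R A \<in> M \<and> strongly_J_clean T A) \<longleftrightarrow> A \<in> N"
proof -
  obtain a b c d where Ad: "A = (a,b,c,d)" by (metis prod_cases4)
  have c: "a \<in> carrier R" "b \<in> carrier R" "c \<in> carrier R" "d \<in> carrier R" using A Ad by (auto simp: T_carrier)
  have det: "det_s R s A = a \<otimes> d \<ominus> s \<otimes> s \<otimes> b \<otimes> c" unfolding Ad det_s_def by simp
  have tr: "tr2 R A = a \<oplus> d" unfolding Ad tr2_def by simp
  show ?thesis
  proof
    assume h: "det_s R s A \<in> M \<and> tr2 R A \<in> M \<and> strongly_J_clean T A"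
    then obtain e where e: "e \<in> carrier T" "e \<otimes>\<^bsub>T\<^esub> e = e" "A \<ominus>\<^bsub>T\<^esub> e \<in> N"
      unfolding strongly_J_clean_def jac_T by blast
    obtain p q r t where ed: "e = (p,q,r,t)" by (metis prod_cases4)
    have ce: "p \<in> carrier R" "q \<in> carrier R" "r \<in> carrier R" "t \<in> carrier R" using e(1) ed by (auto simp: T_carrier)
    have idem: "p \<otimes> p \<oplus> s \<otimes> s \<otimes> q \<otimes> r = p" "p \<otimes> q \<oplus> q \<otimes> t = q" "r \<otimes> p \<oplus> t \<otimes> r = r"
      "s \<otimes> s \<otimes> r \<otimes> q \<oplus> t \<otimes> t = t" using e(2) unfolding ed T_mult by auto
    have "A \<ominus>\<^bsub>T\<^esub> e = (a \<ominus> p, b \<ominus> q, c \<ominus> r, d \<ominus> t)" unfolding Ad ed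
      by (rule T_minus) (use c ce in \<open>simp_all add: T_carrier\<close>)
    then have mA: "a \<ominus> p \<in> M" "d \<ominus> t \<in> M" "s \<otimes> (b \<ominus> q) \<in> M" "s \<otimes> (c \<ominus> r) \<in> M"
      using e(3) unfolding N_def by auto
    have dM: "a \<otimes> d \<ominus> s \<otimes> s \<otimes> b \<otimes> c \<in> M" and tM: "a \<oplus> d \<in> M" using h det tr by auto
    have "p \<oplus> t = (a \<oplus> d) \<ominus> (a \<ominus> p) \<ominus> (d \<ominus> t)" using c ce by algebra
    then have tauM: "p \<oplus> t \<in> M" using tM mA by (auto intro!: M_minus)
    have "p \<otimes> t \<ominus> s \<otimes> s \<otimes> q \<otimes> r = (a \<otimes> d \<ominus> s \<otimes> s \<otimes> b \<otimes> c) \<ominus> (a \<otimes> (d \<ominus> t) \<oplus> (a \<ominus> p) \<otimes> t)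
        \<oplus> ((s \<otimes> b) \<otimes> (s \<otimes> (c \<ominus> r)) \<oplus> (s \<otimes> (b \<ominus> q)) \<otimes> (s \<otimes> r))"
      using c ce s_carr by algebra
    moreover have "(a \<otimes> d \<ominus> s \<otimes> s \<otimes> b \<otimes> c) \<ominus> (a \<otimes> (d \<ominus> t) \<oplus> (a \<ominus> p) \<otimes> t)
        \<oplus> ((s \<otimes> b) \<otimes> (s \<otimes> (c \<ominus> r)) \<oplus> (s \<otimes> (b \<ominus> q)) \<otimes> (s \<otimes> r)) \<in> M"
    proof -
      have "a \<otimes> (d \<ominus> t) \<in> M" using M_lmul[OF mA(2) c(1)] .
      moreover have "(a \<ominus> p) \<otimes> t \<in> M" using M_rmul[OF mA(1) ce(4)] .
      moreover have "(s \<otimes> b) \<otimes> (s \<otimes> (c \<ominus> r)) \<in> M" using M_lmul[OF mA(4)] c s_carr by simp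
      moreover have "(s \<otimes> (b \<ominus> q)) \<otimes> (s \<otimes> r) \<in> M" using M_rmul[OF mA(3)] ce s_carr by simp
      ultimately show ?thesis using dM by (metis M_add M_minus)
    qed
    ultimately have deltaM: "p \<otimes> t \<ominus> s \<otimes> s \<otimes> q \<otimes> r \<in> M" by simp
    have "(p \<oplus> t) \<otimes> p \<ominus> (p \<otimes> t \<ominus> s \<otimes> s \<otimes> q \<otimes> r) = p \<otimes> p \<oplus> s \<otimes> s \<otimes> q \<otimes> r"
      using ce s_carr by algebra
    moreover have "(p \<oplus> t) \<otimes> p \<ominus> (p \<otimes> t \<ominus> s \<otimes> s \<otimes> q \<otimes> r) \<in> M"
      using tauM deltaM ce by (auto intro!: M_minus M_rmul)
    ultimately have pM: "p \<in> M" using idem(1) by simp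
    have "(p \<oplus> t) \<otimes> t \<ominus> (p \<otimes> t \<ominus> s \<otimes> s \<otimes> q \<otimes> r) = s \<otimes> s \<otimes> r \<otimes> q \<oplus> t \<otimes> t"
      using ce s_carr by algebra
    moreover have "(p \<oplus> t) \<otimes> t \<ominus> (p \<otimes> t \<ominus> s \<otimes> s \<otimes> q \<otimes> r) \<in> M"
      using tauM deltaM ce by (auto intro!: M_minus M_rmul)
    ultimately have ttM: "t \<in> M" using idem(4) by simp
    have "(p \<oplus> t) \<otimes> q = p \<otimes> q \<oplus> q \<otimes> t" using ce by algebra
    moreover have "(p \<oplus> t) \<otimes> q \<in> M" using tauM ce by (auto intro!: M_rmul)
    ultimately have qM: "q \<in> M" using idem(2) by simp
    have "(p \<oplus> t) \<otimes> r = r \<otimes> p \<oplus> t \<otimes> r" using ce by algebra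
    moreover have "(p \<oplus> t) \<otimes> r \<in> M" using tauM ce by (auto intro!: M_rmul)
    ultimately have rM: "r \<in> M" using idem(3) by simp
    have "a = (a \<ominus> p) \<oplus> p" using c ce by algebra
    then have aM: "a \<in> M" using mA pM M_add by metis
    have "d = (d \<ominus> t) \<oplus> t" using c ce by algebra
    then have ddM: "d \<in> M" using mA ttM M_add by metis
    have "s \<otimes> b = s \<otimes> (b \<ominus> q) \<oplus> s \<otimes> q" using c ce s_carr by algebra
    then have bM: "s \<otimes> b \<in> M" using mA qM M_add M_lmul s_carr by metis
    have "s \<otimes> c = s \<otimes> (c \<ominus> r) \<oplus> s \<otimes> r" using c ce s_carr by algebra
    then have cM: "s \<otimes> c \<in> M" using mA rM M_add M_lmul s_carr by metis
    show "A \<in> N" unfolding Ad N_def using aM ddM bM cM c by (simp add: T_carrier)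
  next
    assume AN: "A \<in> N"
    then have m: "a \<in> M" "d \<in> M" "s \<otimes> b \<in> M" "s \<otimes> c \<in> M" unfolding Ad N_def by auto
    have "a \<otimes> d \<ominus> s \<otimes> s \<otimes> b \<otimes> c = a \<otimes> d \<ominus> (s \<otimes> b) \<otimes> (s \<otimes> c)" using c s_carr by algebra
    moreover have "a \<otimes> d \<ominus> (s \<otimes> b) \<otimes> (s \<otimes> c) \<in> M" using m c s_carr by (auto intro!: M_minus M_rmul)
    ultimately have "det_s R s A \<in> M" using det by simp
    moreover have "tr2 R A \<in> M" using tr m M_add by simp
    moreover have "strongly_J_clean T A"
      unfolding strongly_J_clean_def jac_T
    proof (intro bexI conjI)
      show "\<zero>\<^bsub>T\<^esub> \<in> carrier T" by (simp add: T_zero T_carrier)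
      show "\<zero>\<^bsub>T\<^esub> \<otimes>\<^bsub>T\<^esub> \<zero>\<^bsub>T\<^esub> = \<zero>\<^bsub>T\<^esub>" using s_carr by (simp add: T_zero T_mult)
      show "A \<otimes>\<^bsub>T\<^esub> \<zero>\<^bsub>T\<^esub> = \<zero>\<^bsub>T\<^esub> \<otimes>\<^bsub>T\<^esub> A" using s_carr c by (simp add: Ad T_zero T_mult)
      have "A \<ominus>\<^bsub>T\<^esub> \<zero>\<^bsub>T\<^esub> = (a \<ominus> \<zero>, b \<ominus> \<zero>, c \<ominus> \<zero>, d \<ominus> \<zero>)" unfolding Ad T_zero
        by (rule T_minus) (use c in \<open>simp_all add: T_carrier\<close>)
      also have "\<dots> = A" using c by (simp add: Ad a_minus_def)
      finally show "A \<ominus>\<^bsub>T\<^esub> \<zero>\<^bsub>T\<^esub> \<in> N" using AN by simp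
    qed
    ultimately show "det_s R s A \<in> M \<and> tr2 R A \<in> M \<and> strongly_J_clean T A" by blast
  qed
qed

end

theorem proposition3p3:
  fixes R :: "('a, 'b) ring_scheme" and s :: 'a and A :: "'a \<times> 'a \<times> 'a \<times> 'a"
  assumes "local_cring R"
    and "s \<in> carrier R"
    and "A \<in> carrier (M2s R s)"
  shows "(det_s R s A \<in> jacobson R \<and> tr2 R A \<in> jacobson R \<and> strongly_J_clean (M2s R s) A)
         \<longleftrightarrow> A \<in> jacobson (M2s R s)"
proof -
  have cr: "cring R" and ex: "\<exists>!M. maximalideal M R" using assms(1) unfolding local_cring_def by auto
  then obtain M where M: "maximalideal M R" "\<And>M'. maximalideal M' R \<Longrightarrow> M' = M" by blast
  interpret L: loc R M s
    by (intro loc.intro loc_axioms.intro cr M assms(2))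
  show ?thesis using L.main[OF assms(3)] L.jac_R L.jac_T by simp
qed

end
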